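(* Let $W(x,y)=w(d(x,y))$ be an ultrametric graphon on $[0,1]$ (setting described in the context), with deterministic ultrametric Laplacian $L_d^k$. If $E_I^k$ is the spectral projector of $L_d^k$ attached to an interval $I$ of level $\ell<M$, then there exists $E_I\in L^2([0,1]\times[0,1])$ such that $\|T(N_kE_I^k)-T(E_I)\|_{HS}\to0$ as $k\to\infty$.
   Context: Nested partitions: fix $M\ge1$ and finite partitions $\Upsilon_1,\dots,\Upsilon_M$ of $[0,1]$ into intervals with $\Upsilon_1=\{[0,1]\}$, each interval of $\Upsilon_\ell$ ($\ell<M$) being a disjoint union of at least two intervals of $\Upsilon_{\ell+1}$; an interval of $\Upsilon_\ell$ has level $\ell$ and its children are the intervals of $\Upsilon_{\ell+1}$ it contains. Heights $h(I)>0$ with $h(I)<h(J)$ when $I\subsetneq J$; $d(x,x)=0$ and $d(x,y)=h(J)$ for $x\ne y$ with $J$ the smallest interval containing both. Ultrametric graphon $W=w\circ d$, $w:[0,\infty)\to[0,1]$ positive. Sampling: last-level intervals have rational lengths; $N$ = lcm of denominators, $N_k=kN$; each last-level interval $I$ receives $N_k\mu(I)$ equispaced points $x_1<\dots<x_{N_k}$, the $i$-th lying in the $i$-th interval of the uniform partition of $[0,1]$ into $N_k$ intervals of length $1/N_k$; $m$ is counting measure on the sample. $L_d^k=A_d^k-D_d^k$ with $A_d^k=(W(x_i,x_j))$, $D_d^k$ the row-sum diagonal. The spectral projector $E_I^k$ attached to $I$ is the $N_k\times N_k$ matrix with $E_I^k(x,y)=-\frac1{m(I)}$ if $x,y\in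 I$ are in different children of $I$, $\frac1{m(J)}-\frac1{m(I)}$ if $x,y$ lie in the same child $J$ of $I$, and $0$ if $x\notin I$ or $y\notin I$. For an $n\times n$ matrix $A$, $T(A)$ is the integral operator on $L^2([0,1])$ with kernel $A(x,y)=A_{ij}$ for $x\in[\frac{i-1}{n},\frac in)$, $y\in[\frac{j-1}{n},\frac jn)$; for a kernel $K\in L^2([0,1]^2)$, $T(K)f(x)=\int_0^1K(x,y)f(y)\,dy$; $\|\cdot\|_{HS}$ is the Hilbert–Schmidt norm. *)

theory Defs
  imports "HOL-Analysis.Analysis"
begin

definition nested_partitions :: "nat \<Rightarrow> (nat \<Rightarrow> real set set) \<Rightarrow> bool" where
  "nested_partitions M Ups \<longleftrightarrow>
     1 \<le> M \<and> Ups 1 = {{0..1}} \<and>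
     (\<forall>l\<in>{1..M}. finite (Ups l) \<and> pairwise disjnt (Ups l) \<and> \<Union>(Ups l) = {0..1} \<and>
        (\<forall>I\<in>Ups l. is_interval I \<and> I \<noteq> {})) \<and>
     (\<forall>l. 1 \<le> l \<and> l < M \<longrightarrow> (\<forall>I\<in>Ups l.
        I = \<Union>{J\<in>Ups (Suc l). J \<subseteq> I} \<and> 2 \<le> card {J\<in>Ups (Suc l). J \<subseteq> I}))"

definition children :: "(nat \<Rightarrow> real set set) \<Rightarrow> nat \<Rightarrow> real set \<Rightarrow> real set set" where
  "children Ups l I = {J\<in>Ups (Suc l). J \<subseteq> I}"

abbreviation len :: "real set \<Rightarrow> real" where
  "len I \<equiv> measure lborel I"

definition rat_denom :: "real \<Rightarrow> nat" where
  "rat_denom x = nat (snd (quotient_of (THE r. x = of_rat r)))"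

definition sample_N :: "nat \<Rightarrow> (nat \<Rightarrow> real set set) \<Rightarrow> nat" where
  "sample_N M Ups = Lcm ((\<lambda>I. rat_denom (len I)) ` Ups M)"

definition valid_sample :: "nat \<Rightarrow> (nat \<Rightarrow> real set set) \<Rightarrow> nat \<Rightarrow> (nat \<Rightarrow> real) \<Rightarrow> bool" where
  "valid_sample M Ups n xs \<longleftrightarrow>
     strict_mono_on {1..n} xs \<and>
     (\<forall>i\<in>{1..n}. (real i - 1) / real n \<le> xs i \<and> xs i < real i / real n) \<and>
     (\<forall>I\<in>Ups M. real (card {i\<in>{1..n}. xs i \<in> I}) = real n * len I) \<and>
     (\<forall>I\<in>Ups M. \<forall>i j. 1 \<le> i \<and> Suc i \<le> n \<and> 1 \<le> j \<and> Suc j \<le> n \<and>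
        xs i \<in> I \<and> xs (Suc i) \<in> I \<and> xs j \<in> I \<and> xs (Suc j) \<in> I \<longrightarrow>
        xs (Suc i) - xs i = xs (Suc j) - xs j)"

definition mcount :: "nat \<Rightarrow> (nat \<Rightarrow> real) \<Rightarrow> real set \<Rightarrow> real" where
  "mcount n xs S = real (card {i\<in>{1..n}. xs i \<in> S})"

text \<open>Spectral projector E_I^k (entries indexed by 1..n).\<close>
definition proj_matrix ::
  "(nat \<Rightarrow> real set set) \<Rightarrow> nat \<Rightarrow> real set \<Rightarrow> nat \<Rightarrow> (nat \<Rightarrow> real) \<Rightarrow> nat \<Rightarrow> nat \<Rightarrow> real" where
  "proj_matrix Ups l I n xs i j =
     (if xs i \<in> I \<and> xs j \<in> I then
        (if \<exists>J\<in>children Ups l I. xs i \<in> J \<and> xs j \<in> J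
         then 1 / mcount n xs (THE J. J \<in> children Ups l I \<and> xs i \<in> J)
              - 1 / mcount n xs I
         else - 1 / mcount n xs I)
      else 0)"

definition step_kernel :: "nat \<Rightarrow> (nat \<Rightarrow> nat \<Rightarrow> real) \<Rightarrow> real \<times> real \<Rightarrow> real" where
  "step_kernel n A = (\<lambda>(x, y). A (nat \<lfloor>real n * x\<rfloor> + 1) (nat \<lfloor>real n * y\<rfloor> + 1))"

definition L2_unit_square :: "(real \<times> real \<Rightarrow> real) \<Rightarrow> bool" where
  "L2_unit_square K \<longleftrightarrow> set_borel_measurable lborel ({0..1} \<times> {0..1}) K \<and>
     set_integrable lborel ({0..1} \<times> {0..1}) (\<lambda>z. (K z)\<^sup>2)"

text \<open>Hilbert-Schmidt norm of T(K1) - T(K2) = L^2 norm of the kernel K1 - K2 on [0,1]^2.\<close>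
definition hs_dist :: "(real \<times> real \<Rightarrow> real) \<Rightarrow> (real \<times> real \<Rightarrow> real) \<Rightarrow> real" where
  "hs_dist K1 K2 = sqrt (LINT z:{0..1} \<times> {0..1}|lborel. (K1 z - K2 z)\<^sup>2)"

end

theory Submission
  imports Defs "HOL-Analysis.Analysis"
begin


lemma decomp:
  assumes part: "nested_partitions M Ups"
  shows "1 \<le> l' \<Longrightarrow> l' \<le> M \<Longrightarrow> J \<in> Ups l' \<Longrightarrow> J = \<Union>{K\<in>Ups M. K \<subseteq> J}"
proof (induction "M - l'" arbitrary: l' J)
  case 0
  then have "l' = M" by simp
  then show ?case using 0 by blast
next
  case (Suc d)
  then have lt: "l' < M" by simp
  have J: "J = \<Union>{C\<in>Ups (Suc l'). C \<subseteq> J}"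
    using part lt Suc.prems unfolding nested_partitions_def by blast
  have C: "C = \<Union>{K\<in>Ups M. K \<subseteq> C}" if "C \<in> Ups (Suc l')" for C
    using Suc.hyps(1)[of "Suc l'" C] Suc.hyps(2) lt that by simp
  show ?case
  proof
    show "J \<subseteq> \<Union>{K \<in> Ups M. K \<subseteq> J}"
    proof
      fix z assume "z \<in> J"
      then obtain C where "C \<in> Ups (Suc l')" "C \<subseteq> J" "z \<in> C" using J by blast
      then obtain K where "K \<in> Ups M" "K \<subseteq> C" "z \<in> K" using C by blast
      then show "z \<in> \<Union>{K \<in> Ups M. K \<subseteq> J}" using \<open>C \<subseteq> J\<close> by blast
    qed
  qed blast
qed

lemma interval_fmeas:
  assumes "is_interval (K::real set)" "K \<subseteq> {0..1}"
  shows "K \<in> fmeasurable lborel"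
proof (rule fmeasurableI2[of "{0..1}"])
  show "{0..1::real} \<in> fmeasurable lborel" by (simp add: fmeasurableI)
  show "K \<in> sets lborel" using real_interval_borel_measurable[OF assms(1)] by simp
qed (use assms in auto)

lemma mcount_len:
  assumes part: "nested_partitions M Ups" and vs: "valid_sample M Ups n xs"
    and "1 \<le> l'" "l' \<le> M" "J \<in> Ups l'"
  shows "mcount n xs J = real n * len J"
proof -
  define S where "S = {K\<in>Ups M. K \<subseteq> J}"
  have JS: "J = \<Union>S" using decomp[OF part assms(3-5)] S_def by simp
  have finM: "finite (Ups M)" and dM: "pairwise disjnt (Ups M)" and uM: "\<Union>(Ups M) = {0..1}"
    and iM: "\<forall>K\<in>Ups M. is_interval K \<and> K \<noteq> {}"
    using part assms(3,4) unfolding nested_partitions_def by auto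
  have finS: "finite S" using finM S_def by simp
  have SM: "S \<subseteq> Ups M" using S_def by auto
  have "{i\<in>{1..n}. xs i \<in> J} = (\<Union>K\<in>S. {i\<in>{1..n}. xs i \<in> K})" using JS by blast
  then have "card {i\<in>{1..n}. xs i \<in> J} = (\<Sum>K\<in>S. card {i\<in>{1..n}. xs i \<in> K})"
  proof (simp only:)
    show "card (\<Union>K\<in>S. {i\<in>{1..n}. xs i \<in> K}) = (\<Sum>K\<in>S. card {i\<in>{1..n}. xs i \<in> K})"
    proof (rule card_UN_disjoint[OF finS])
      show "\<forall>K\<in>S. \<forall>K'\<in>S. K \<noteq> K' \<longrightarrow> {i\<in>{1..n}. xs i \<in> K} \<inter> {i\<in>{1..n}. xs i \<in> K'} = {}"
        using dM SM unfolding pairwise_def disjnt_def by blast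
    qed auto
  qed
  then have "mcount n xs J = (\<Sum>K\<in>S. real n * len K)"
    using vs SM unfolding mcount_def valid_sample_def by (simp add: subset_iff)
  also have "\<dots> = real n * (\<Sum>K\<in>S. len K)" by (simp add: sum_distrib_left)
  also have "(\<Sum>K\<in>S. len K) = len J"
  proof -
    have "len (\<Union>S) = (\<Sum>K\<in>S. len K)"
    proof (rule measure_Union'[OF finS])
      show "K \<in> fmeasurable lborel" if "K \<in> S" for K
        using interval_fmeas iM uM SM that by blast
      show "pairwise disjnt S" using dM SM pairwise_subset by blast
    qed
    then show ?thesis using JS by simp
  qed
  finally show ?thesis .
qed



definition cell :: "nat \<Rightarrow> nat \<Rightarrow> real set" where
  "cell n i = {(real i - 1) / real n ..< real i / real n}"

lemma cell_order:
  assumes "n > 0" "i < i'" "p \<in> cell n i" "q \<in> cell n i'"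
  shows "p < q"
proof -
  have "real i \<le> real i' - 1" using assms(2) by simp
  then have "real i / real n \<le> (real i' - 1) / real n" using assms(1) by (simp add: divide_right_mono)
  then show ?thesis using assms(3,4) unfolding cell_def by auto
qed

lemma low_unique:
  assumes S: "is_interval (S::real set)" and n: "n > 0"
    and a: "p \<in> cell n i" "q \<in> cell n i" "p \<in> S" "q \<notin> S" "q < p"
    and b: "p' \<in> cell n i'" "q' \<in> cell n i'" "p' \<in> S" "q' \<notin> S" "q' < p'"
  shows "i = i'"
proof (rule ccontr)
  have Si: "\<forall>a\<in>S. \<forall>b\<in>S. \<forall>x. a \<le> x \<and> x \<le> b \<longrightarrow> x \<in> S" using S is_interval_1 by blast
  assume "i \<noteq> i'"
  then consider "i < i'" | "i' < i" using nat_neq_iff by blast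
  then show False
  proof cases
    case 1
    then have "p < q'" using cell_order[OF n 1 a(1) b(2)] by simp
    then have "q' \<in> S" using Si a(3) b(3) b(5) by (meson less_imp_le)
    then show False using b(4) by simp
  next
    case 2
    then have "p' < q" using cell_order[OF n 2 b(1) a(2)] by simp
    then have "q \<in> S" using Si a(3) b(3) a(5) by (meson less_imp_le)
    then show False using a(4) by simp
  qed
qed

lemma high_unique:
  assumes S: "is_interval (S::real set)" and n: "n > 0"
    and a: "p \<in> cell n i" "q \<in> cell n i" "p \<in> S" "q \<notin> S" "p < q"
    and b: "p' \<in> cell n i'" "q' \<in> cell n i'" "p' \<in> S" "q' \<notin> S" "p' < q'"
  shows "i = i'"
proof (rule ccontr)
  have Si: "\<forall>a\<in>S. \<forall>b\<in>S. \<forall>x. a \<le> x \<and> x \<le> b \<longrightarrow> x \<in> S" using S is_interval_1 by blast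
  assume "i \<noteq> i'"
  then consider "i < i'" | "i' < i" using nat_neq_iff by blast
  then show False
  proof cases
    case 1
    then have "q < p'" using cell_order[OF n 1 a(2) b(1)] by simp
    then have "q \<in> S" using Si a(3) b(3) a(5) by (meson less_imp_le)
    then show False using a(4) by simp
  next
    case 2
    then have "q' < p" using cell_order[OF n 2 b(2) a(1)] by simp
    then have "q' \<in> S" using Si a(3) b(3) b(5) by (meson less_imp_le)
    then show False using b(4) by simp
  qed
qed

definition mixed :: "nat \<Rightarrow> real set \<Rightarrow> nat \<Rightarrow> bool" where
  "mixed n S i \<longleftrightarrow> (\<exists>p\<in>cell n i. \<exists>q\<in>cell n i. p \<in> S \<and> q \<notin> S)"

lemma mixed_card:
  assumes S: "is_interval (S::real set)" and n: "n > 0"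
  shows "card {i\<in>{1..n}. mixed n S i} \<le> 2"
proof -
  define L where "L = {i\<in>{1..n}. \<exists>p\<in>cell n i. \<exists>q\<in>cell n i. p \<in> S \<and> q \<notin> S \<and> q < p}"
  define H where "H = {i\<in>{1..n}. \<exists>p\<in>cell n i. \<exists>q\<in>cell n i. p \<in> S \<and> q \<notin> S \<and> p < q}"
  have sub: "{i\<in>{1..n}. mixed n S i} \<subseteq> L \<union> H"
  proof
    fix i assume "i \<in> {i\<in>{1..n}. mixed n S i}"
    then obtain p q where "i \<in> {1..n}" "p\<in>cell n i" "q\<in>cell n i" "p \<in> S" "q \<notin> S"
      unfolding mixed_def by auto
    moreover have "p \<noteq> q" using \<open>p \<in> S\<close> \<open>q \<notin> S\<close> by auto
    ultimately show "i \<in> L \<union> H" unfolding L_def H_def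
      by (metis (mono_tags, lifting) Un_iff linorder_neqE_linordered_idom mem_Collect_eq)
  qed
  have finL: "finite L" unfolding L_def by simp
  have finH: "finite H" unfolding H_def by simp
  have "card L \<le> Suc 0"
    unfolding card_le_Suc0_iff_eq[OF finL]
  proof (intro ballI)
    fix a b assume "a \<in> L" "b \<in> L"
    then obtain p q p' q' where "p \<in> cell n a" "q \<in> cell n a" "p \<in> S" "q \<notin> S" "q < p"
      "p' \<in> cell n b" "q' \<in> cell n b" "p' \<in> S" "q' \<notin> S" "q' < p'"
      unfolding L_def by blast
    then show "a = b" by (rule low_unique[OF S n])
  qed
  moreover have "card H \<le> Suc 0"
    unfolding card_le_Suc0_iff_eq[OF finH]
  proof (intro ballI)
    fix a b assume "a \<in> H" "b \<in> H"
    then obtain p q p' q' where "p \<in> cell n a" "q \<in> cell n a" "p \<in> S" "q \<notin> S" "p < q"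
      "p' \<in> cell n b" "q' \<in> cell n b" "p' \<in> S" "q' \<notin> S" "p' < q'"
      unfolding H_def by blast
    then show "a = b" by (rule high_unique[OF S n])
  qed
  moreover have "card {i\<in>{1..n}. mixed n S i} \<le> card (L \<union> H)"
    by (rule card_mono) (use finL finH sub in auto)
  moreover have "card (L \<union> H) \<le> card L + card H" by (rule card_Un_le)
  ultimately show ?thesis by linarith
qed

lemma cell_index:
  assumes n: "n > 0" and x: "0 \<le> x" "x < 1"
  shows "nat \<lfloor>real n * x\<rfloor> + 1 \<in> {1..n}" "x \<in> cell n (nat \<lfloor>real n * x\<rfloor> + 1)"
proof -
  have f0: "0 \<le> \<lfloor>real n * x\<rfloor>" using n x by simp
  have "real n * x < real n" using n x by simp
  then have fl: "\<lfloor>real n * x\<rfloor> < int n" by linarith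
  then have "nat \<lfloor>real n * x\<rfloor> < n" using f0 by (simp add: nat_less_iff)
  then show "nat \<lfloor>real n * x\<rfloor> + 1 \<in> {1..n}" by auto
  have r: "real (nat \<lfloor>real n * x\<rfloor> + 1) = of_int \<lfloor>real n * x\<rfloor> + 1" using f0 by simp
  have a: "of_int \<lfloor>real n * x\<rfloor> \<le> real n * x" by (rule of_int_floor_le)
  have b: "real n * x < of_int \<lfloor>real n * x\<rfloor> + 1" by (rule real_of_int_floor_add_one_gt)
  have "(of_int \<lfloor>real n * x\<rfloor> + 1 - 1) / real n \<le> x" using a n by (simp add: divide_le_eq mult.commute)
  moreover have "x < (of_int \<lfloor>real n * x\<rfloor> + 1) / real n" using b n by (simp add: less_divide_eq mult.commute)
  ultimately show "x \<in> cell n (nat \<lfloor>real n * x\<rfloor> + 1)" unfolding cell_def r by simp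
qed


definition Ek :: "real set set \<Rightarrow> real set \<Rightarrow> real \<times> real \<Rightarrow> real" where
  "Ek ch I z = (\<Sum>J\<in>ch. indicator (J \<times> J) z / len J) - indicator (I \<times> I) z / len I"

lemma ind_pair: "indicator (J \<times> J) (s, t) = (if s \<in> J \<and> t \<in> J then 1 else (0::real))"
  by (simp add: indicator_def)

lemma proj_eq:
  assumes fin: "finite ch" and disj: "pairwise disjnt ch" and sub: "\<forall>J\<in>ch. J \<subseteq> I" and n: "n > 0"
    and mc: "\<forall>J\<in>insert I ch. mcount n xs J = real n * len J" and ch: "ch = children Ups l I"
  shows "real n * proj_matrix Ups l I n xs i j = Ek ch I (xs i, xs j)"
proof -
  have inv: "real n * (1 / mcount n xs J) = 1 / len J" if "J \<in> insert I ch" for J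
  proof -
    have e: "mcount n xs J = real n * len J" using mc that by blast
    have nz: "real n \<noteq> 0" using n by simp
    show ?thesis unfolding e using nz by simp
  qed
  consider (A) "xs i \<in> I \<and> xs j \<in> I" "\<exists>J\<in>ch. xs i \<in> J \<and> xs j \<in> J"
    | (B) "xs i \<in> I \<and> xs j \<in> I" "\<not> (\<exists>J\<in>ch. xs i \<in> J \<and> xs j \<in> J)"
    | (C) "\<not> (xs i \<in> I \<and> xs j \<in> I)" by blast
  then show ?thesis
  proof cases
    case A
    then obtain J0 where J0: "J0 \<in> ch" "xs i \<in> J0" "xs j \<in> J0" by blast
    have uniq: "J = J0" if "J \<in> ch" "xs i \<in> J" for J
    proof (rule ccontr)
      assume "J \<noteq> J0"
      then have "disjnt J J0" using disj that(1) J0(1) unfolding pairwise_def by blast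
      then show False using that(2) J0(2) unfolding disjnt_def by blast
    qed
    have th: "(THE J. J \<in> children Ups l I \<and> xs i \<in> J) = J0"
    proof (rule the_equality)
      show "J0 \<in> children Ups l I \<and> xs i \<in> J0" using J0 ch by simp
      fix J assume "J \<in> children Ups l I \<and> xs i \<in> J"
      then have "J \<in> ch" "xs i \<in> J" using ch by simp_all
      then show "J = J0" by (rule uniq)
    qed
    have "(\<Sum>J\<in>ch. indicator (J \<times> J) (xs i, xs j) / len J) = (\<Sum>J\<in>ch. if J = J0 then 1 / len J else 0)"
    proof (rule sum.cong)
      fix J assume "J \<in> ch"
      then show "indicator (J \<times> J) (xs i, xs j) / len J = (if J = J0 then 1 / len J else 0)"
      proof (cases "J = J0")
        case True then show ?thesis using J0 by (simp add: ind_pair)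
      next
        case False
        then have "xs i \<notin> J" using uniq \<open>J \<in> ch\<close> by blast
        then show ?thesis using False by (simp add: ind_pair)
      qed
    qed simp
    also have "\<dots> = 1 / len J0" using fin J0 by simp
    finally have s: "(\<Sum>J\<in>ch. indicator (J \<times> J) (xs i, xs j) / len J) = 1 / len J0" .
    have "real n * proj_matrix Ups l I n xs i j
        = real n * (1 / mcount n xs J0) - real n * (1 / mcount n xs I)"
      using A th unfolding proj_matrix_def ch[symmetric] by (simp add: right_diff_distrib)
    also have "\<dots> = 1 / len J0 - 1 / len I" using inv J0 by simp
    finally show ?thesis unfolding Ek_def s using A by (simp add: ind_pair)
  next
    case B
    have s: "(\<Sum>J\<in>ch. indicator (J \<times> J) (xs i, xs j) / len J) = 0"
      using B by (intro sum.neutral) (auto simp: ind_pair)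
    have "real n * proj_matrix Ups l I n xs i j = - (real n * (1 / mcount n xs I))"
    proof -
      have nex: "\<not> (\<exists>J\<in>children Ups l I. xs i \<in> J \<and> xs j \<in> J)" using B(2) ch by simp
      have "proj_matrix Ups l I n xs i j = - 1 / mcount n xs I"
        unfolding proj_matrix_def using B(1) nex by (simp only: if_True if_False simp_thms)
      then show ?thesis by simp
    qed
    also have "\<dots> = - (1 / len I)" using inv by simp
    finally show ?thesis unfolding Ek_def s using B by (simp add: ind_pair)
  next
    case C
    have s: "(\<Sum>J\<in>ch. indicator (J \<times> J) (xs i, xs j) / len J) = 0"
      using C sub by (intro sum.neutral) (auto simp: ind_pair)
    have p0: "proj_matrix Ups l I n xs i j = 0" unfolding proj_matrix_def using C by (simp only: if_False)
    have "indicator (I \<times> I) (xs i, xs j) = (0::real)" using C by (simp add: ind_pair)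
    then show ?thesis unfolding Ek_def s p0 by simp
  qed
qed

lemma Ek_bound:
  assumes fin: "finite ch"
  shows "\<bar>Ek ch I z\<bar> \<le> (\<Sum>J\<in>ch. 1 / len J) + 1 / len I"
proof -
  have "\<bar>\<Sum>J\<in>ch. indicator (J \<times> J) z / len J\<bar> \<le> (\<Sum>J\<in>ch. \<bar>indicator (J \<times> J) z / len J\<bar>)"
    by (rule sum_abs)
  also have "\<dots> \<le> (\<Sum>J\<in>ch. 1 / len J)"
    by (intro sum_mono) (auto simp: indicator_def)
  finally have a: "\<bar>\<Sum>J\<in>ch. indicator (J \<times> J) z / len J\<bar> \<le> (\<Sum>J\<in>ch. 1 / len J)" .
  have b: "\<bar>indicator (I \<times> I) z / len I\<bar> \<le> 1 / len I" by (auto simp: indicator_def)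
  show ?thesis unfolding Ek_def using a b by linarith
qed

lemma Ek_cong:
  assumes "\<forall>S\<in>insert I ch. (s \<in> S \<longleftrightarrow> s' \<in> S) \<and> (t \<in> S \<longleftrightarrow> t' \<in> S)"
  shows "Ek ch I (s, t) = Ek ch I (s', t')"
proof -
  have "(\<Sum>J\<in>ch. indicator (J \<times> J) (s, t) / len J) = (\<Sum>J\<in>ch. indicator (J \<times> J) (s', t') / len J)"
    using assms by (intro sum.cong) (auto simp: ind_pair)
  moreover have "indicator (I \<times> I) (s, t) = (indicator (I \<times> I) (s', t') :: real)"
    using assms by (auto simp: ind_pair)
  ultimately show ?thesis unfolding Ek_def by simp
qed

lemma sets_lborel_Times:
  assumes "A \<in> sets borel" "B \<in> sets borel"
  shows "(A \<times> B :: (real \<times> real) set) \<in> sets lborel"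
proof -
  have "A \<times> B \<in> sets (lborel \<Otimes>\<^sub>M lborel)" using assms by (intro pair_measureI) auto
  then show ?thesis unfolding lborel_prod .
qed

lemma Ek_measurable:
  assumes "\<forall>J\<in>insert I ch. J \<in> sets borel"
  shows "Ek ch I \<in> borel_measurable lborel"
proof -
  have "(\<lambda>z. Ek ch I z) \<in> borel_measurable lborel"
    unfolding Ek_def
    using assms sets_lborel_Times by (intro borel_measurable_diff borel_measurable_sum borel_measurable_divide
        borel_measurable_indicator measurable_const) auto
  then show ?thesis by simp
qed

lemma measure_Times_real:
  assumes "A \<in> sets borel" "B \<in> sets borel"
  shows "measure lborel (A \<times> B :: (real \<times> real) set) = measure lborel A * measure lborel B"
proof -
  have "emeasure (lborel \<Otimes>\<^sub>M lborel) (A \<times> B) = emeasure lborel A * emeasure lborel B"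
    using assms by (intro lborel.emeasure_pair_measure_Times) auto
  then have "emeasure lborel (A \<times> B) = emeasure lborel A * emeasure lborel B"
    unfolding lborel_prod .
  then show ?thesis unfolding measure_def by (simp add: enn2real_mult)
qed



lemma emeasure_Times_real:
  assumes "A \<in> sets borel" "B \<in> sets borel"
  shows "emeasure lborel (A \<times> B :: (real \<times> real) set) = emeasure lborel A * emeasure lborel B"
proof -
  have "emeasure (lborel \<Otimes>\<^sub>M lborel) (A \<times> B) = emeasure lborel A * emeasure lborel B"
    using assms by (intro lborel.emeasure_pair_measure_Times) auto
  then show ?thesis unfolding lborel_prod .
qed

lemma Sq_fmeas: "({0..1} \<times> {0..1} :: (real \<times> real) set) \<in> fmeasurable lborel"
proof (rule fmeasurableI)
  show "({0..1} \<times> {0..1} :: (real \<times> real) set) \<in> sets lborel" by (intro sets_lborel_Times) auto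
  have "emeasure lborel ({0..1} \<times> {0..1} :: (real \<times> real) set) = 1"
    by (subst emeasure_Times_real) auto
  then show "emeasure lborel ({0..1} \<times> {0..1} :: (real \<times> real) set) < \<infinity>" by simp
qed

lemma struct_facts:
  assumes part: "nested_partitions M Ups" and lev: "1 \<le> l" "l < M" and I: "I \<in> Ups l"
  shows "finite (children Ups l I)" "pairwise disjnt (children Ups l I)"
    "\<forall>J\<in>children Ups l I. J \<subseteq> I"
    "\<forall>S\<in>insert I (children Ups l I). is_interval S \<and> S \<subseteq> {0..1} \<and> (\<exists>l'. 1 \<le> l' \<and> l' \<le> M \<and> S \<in> Ups l')"
proof -
  have P: "\<forall>l\<in>{1..M}. finite (Ups l) \<and> pairwise disjnt (Ups l) \<and> \<Union>(Ups l) = {0..1} \<and>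
        (\<forall>I\<in>Ups l. is_interval I \<and> I \<noteq> {})" using part unfolding nested_partitions_def by blast
  have l1: "l \<in> {1..M}" "Suc l \<in> {1..M}" using lev by auto
  have sub: "children Ups l I \<subseteq> Ups (Suc l)" unfolding children_def by auto
  show "finite (children Ups l I)" using P l1(2) sub finite_subset by blast
  show "pairwise disjnt (children Ups l I)" using P l1(2) sub pairwise_subset by blast
  show "\<forall>J\<in>children Ups l I. J \<subseteq> I" unfolding children_def by auto
  show "\<forall>S\<in>insert I (children Ups l I). is_interval S \<and> S \<subseteq> {0..1} \<and> (\<exists>l'. 1 \<le> l' \<and> l' \<le> M \<and> S \<in> Ups l')"
  proof
    fix S assume S: "S \<in> insert I (children Ups l I)"
    then consider "S = I" | "S \<in> Ups (Suc l)" using sub by blast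
    then show "is_interval S \<and> S \<subseteq> {0..1} \<and> (\<exists>l'. 1 \<le> l' \<and> l' \<le> M \<and> S \<in> Ups l')"
    proof cases
      case 1
      have "is_interval S" "S \<subseteq> {0..1}" using P l1(1) I 1 by blast+
      then show ?thesis using I 1 lev by auto
    next
      case 2
      have "is_interval S" "S \<subseteq> {0..1}" using P l1(2) 2 by blast+
      then show ?thesis using 2 lev by (intro conjI exI[of _ "Suc l"]) auto
    qed
  qed
qed



lemma agree_cell:
  assumes "p \<in> cell n i" "q \<in> cell n i" "\<not> mixed n S i"
  shows "p \<in> S \<longleftrightarrow> q \<in> S"
  using assms unfolding mixed_def by blast

lemma measure_cell:
  assumes "n > 0" shows "measure lborel (cell n i) = 1 / real n"
proof -
  have "(real i - 1) / real n \<le> real i / real n" using assms by (simp add: divide_right_mono)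
  then have "measure lborel (cell n i) = real i / real n - (real i - 1) / real n"
    unfolding cell_def by simp
  also have "\<dots> = 1 / real n" by (simp add: diff_divide_distrib)
  finally show ?thesis .
qed

lemma cell_sub01:
  assumes "n > 0" "i \<in> {1..n}" shows "cell n i \<subseteq> {0..1}"
proof
  fix x assume x: "x \<in> cell n i"
  have a: "0 \<le> (real i - 1) / real n" using assms by simp
  have b: "real i / real n \<le> 1" using assms by simp
  show "x \<in> {0..1}" using x a b unfolding cell_def by auto
qed

lemma bad_measure:
  assumes n: "n > 0" and finT: "finite T" and intT: "\<forall>S\<in>T. is_interval S"
  defines "B \<equiv> insert 1 (\<Union>S\<in>T. \<Union>i\<in>{i\<in>{1..n}. mixed n S i}. cell n i)"
  shows "B \<in> sets borel" "B \<subseteq> {0..1}" "measure lborel B \<le> 2 * real (card T) / real n"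
proof -
  define U where "U = (\<Union>S\<in>T. \<Union>i\<in>{i\<in>{1..n}. mixed n S i}. cell n i)"
  have BU: "B = {1} \<union> U" unfolding B_def U_def by auto
  have cs: "cell n i \<in> sets borel" for i unfolding cell_def by simp
  have Us: "U \<in> sets borel" unfolding U_def
    using finT cs by (intro sets.finite_UN) auto
  show "B \<in> sets borel" unfolding BU using Us by simp
  show "B \<subseteq> {0..1}" unfolding BU U_def using cell_sub01[OF n] by auto
  have inner: "measure lborel (\<Union>i\<in>{i\<in>{1..n}. mixed n S i}. cell n i) \<le> 2 / real n" if "S \<in> T" for S
  proof -
    have "measure lborel (\<Union>i\<in>{i\<in>{1..n}. mixed n S i}. cell n i)
        \<le> (\<Sum>i\<in>{i\<in>{1..n}. mixed n S i}. measure lborel (cell n i))"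
      using cs by (intro measure_UNION_le) auto
    also have "\<dots> = real (card {i\<in>{1..n}. mixed n S i}) / real n"
      using measure_cell[OF n] by simp
    also have "\<dots> \<le> 2 / real n"
      using mixed_card[of S n] intT that n by (simp add: divide_right_mono)
    finally show ?thesis .
  qed
  have "measure lborel U \<le> (\<Sum>S\<in>T. measure lborel (\<Union>i\<in>{i\<in>{1..n}. mixed n S i}. cell n i))"
    unfolding U_def using finT cs by (intro measure_UNION_le) auto
  also have "\<dots> \<le> (\<Sum>S\<in>T. 2 / real n)" using inner by (intro sum_mono) auto
  also have "\<dots> = 2 * real (card T) / real n" by simp
  finally have mU: "measure lborel U \<le> 2 * real (card T) / real n" .
  have "measure lborel B \<le> measure lborel {1::real} + measure lborel U"
    unfolding BU using Us by (intro measure_Un_le) auto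
  then show "measure lborel B \<le> 2 * real (card T) / real n" using mU by simp
qed



lemma main_bound:
  fixes xs :: "nat \<Rightarrow> real"
  assumes part: "nested_partitions M Ups" and lev: "1 \<le> l" "l < M" and I: "I \<in> Ups l"
    and n: "n > 0" and vs: "valid_sample M Ups n xs"
  defines "ch \<equiv> children Ups l I"
  defines "C \<equiv> (\<Sum>J\<in>ch. 1 / len J) + 1 / len I"
  shows "hs_dist (step_kernel n (\<lambda>i j. real n * proj_matrix Ups l I n xs i j)) (Ek ch I)
           \<le> sqrt (16 * C\<^sup>2 * real (card (insert I ch)) / real n)"
    "0 \<le> hs_dist (step_kernel n (\<lambda>i j. real n * proj_matrix Ups l I n xs i j)) (Ek ch I)"
proof -
  note SF = struct_facts[OF part lev I, folded ch_def]
  define T where "T = insert I ch"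
  have finT: "finite T" using SF(1) T_def by simp
  have Tprop: "\<forall>S\<in>T. is_interval S \<and> S \<subseteq> {0..1} \<and> (\<exists>l'. 1 \<le> l' \<and> l' \<le> M \<and> S \<in> Ups l')"
    using SF(4) T_def by simp
  have mc: "\<forall>J\<in>insert I ch. mcount n xs J = real n * len J"
  proof
    fix J assume "J \<in> insert I ch"
    then obtain l' where "1 \<le> l'" "l' \<le> M" "J \<in> Ups l'" using Tprop T_def by blast
    then show "mcount n xs J = real n * len J" by (rule mcount_len[OF part vs])
  qed
  have chd: "ch = children Ups l I" using ch_def by simp
  have pe: "real n * proj_matrix Ups l I n xs i j = Ek ch I (xs i, xs j)" for i j
    by (rule proj_eq[OF SF(1) SF(2) SF(3) n mc chd])
  define G where "G = step_kernel n (\<lambda>i j. real n * proj_matrix Ups l I n xs i j)"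
  define E where "E = Ek ch I"
  define idx where "idx a = nat \<lfloor>real n * a\<rfloor> + 1" for a
  have Gz: "G (a, b) = E (xs (idx a), xs (idx b))" for a b
    unfolding G_def step_kernel_def idx_def E_def using pe by simp
  have Eb: "\<bar>E z\<bar> \<le> C" for z unfolding E_def C_def by (rule Ek_bound[OF SF(1)])
  have Gb: "\<bar>G z\<bar> \<le> C" for z
  proof -
    obtain a b where z: "z = (a, b)" by (cases z)
    show ?thesis unfolding z Gz by (rule Eb)
  qed
  have C0: "0 \<le> C" using Eb[of "(0,0)"] by linarith
  define B where "B = insert 1 (\<Union>S\<in>T. \<Union>i\<in>{i\<in>{1..n}. mixed n S i}. cell n i)"
  have intT: "\<forall>S\<in>T. is_interval S" using Tprop by blast
  note BM = bad_measure[OF n finT intT, folded B_def]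
  define Sq where "Sq = ({0..1} \<times> {0..1} :: (real \<times> real) set)"
  define c where "c = 4 * C\<^sup>2"
  have c0: "0 \<le> c" unfolding c_def by simp
  have good: "xs (idx a) \<in> S \<longleftrightarrow> a \<in> S" if "a \<in> {0..1}" "a \<notin> B" "S \<in> T" for a S
  proof -
    have a1: "0 \<le> a" "a < 1" using that(1,2) B_def by auto
    have i1: "idx a \<in> {1..n}" and ac: "a \<in> cell n (idx a)"
      using cell_index[OF n a1] unfolding idx_def by auto
    have xc: "xs (idx a) \<in> cell n (idx a)"
      using vs i1 unfolding valid_sample_def cell_def by auto
    have "\<not> mixed n S (idx a)"
    proof
      assume "mixed n S (idx a)"
      then have "a \<in> B" using i1 ac that(3) unfolding B_def by blast
      then show False using that(2) by simp
    qed
    then show ?thesis using agree_cell[OF xc ac] by simp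
  qed
  have key: "indicator Sq z * (G z - E z)\<^sup>2
      \<le> c * indicator (B \<times> {0..1}) z + c * indicator ({0..1} \<times> B) z" for z
  proof -
    obtain a b where z: "z = (a, b)" by (cases z)
    have rhs0: "0 \<le> c * indicator (B \<times> {0..1}) z + c * indicator ({0..1} \<times> B) z"
      using c0 by simp
    consider (out) "z \<notin> Sq" | (bad) "z \<in> Sq" "a \<in> B \<or> b \<in> B" | (ok) "z \<in> Sq" "a \<notin> B" "b \<notin> B"
      by blast
    then show ?thesis
    proof cases
      case out
      then show ?thesis using rhs0 by simp
    next
      case bad
      have "\<bar>G z - E z\<bar> \<le> \<bar>2 * C\<bar>" using Gb[of z] Eb[of z] C0 by linarith
      then have "(G z - E z)\<^sup>2 \<le> (2 * C)\<^sup>2" by (simp only: abs_le_square_iff)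
      then have l: "indicator Sq z * (G z - E z)\<^sup>2 \<le> c" using bad(1) unfolding c_def by (simp add: power_mult_distrib)
      have "c \<le> c * indicator (B \<times> {0..1}) z + c * indicator ({0..1} \<times> B) z"
        using bad c0 unfolding z Sq_def by (auto simp: indicator_def)
      then show ?thesis using l by linarith
    next
      case ok
      have a01: "a \<in> {0..1}" "b \<in> {0..1}" using ok(1) unfolding z Sq_def by auto
      have "\<forall>S\<in>insert I ch. (xs (idx a) \<in> S \<longleftrightarrow> a \<in> S) \<and> (xs (idx b) \<in> S \<longleftrightarrow> b \<in> S)"
        using good a01 ok(2,3) T_def by blast
      then have "E (xs (idx a), xs (idx b)) = E (a, b)" unfolding E_def by (rule Ek_cong)
      then have "G z = E z" unfolding z Gz by simp
      then show ?thesis using rhs0 by simp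
    qed
  qed
  have SqF: "Sq \<in> fmeasurable lborel" unfolding Sq_def by (rule Sq_fmeas)
  have B1s: "B \<times> {0..1::real} \<in> sets lborel" by (rule sets_lborel_Times[OF BM(1)]) simp
  have B2s: "{0..1::real} \<times> B \<in> sets lborel" by (rule sets_lborel_Times[OF _ BM(1)]) simp
  have B1f: "B \<times> {0..1::real} \<in> fmeasurable lborel"
    using fmeasurableI2[OF SqF _ B1s] BM(2) unfolding Sq_def by auto
  have B2f: "{0..1::real} \<times> B \<in> fmeasurable lborel"
    using fmeasurableI2[OF SqF _ B2s] BM(2) unfolding Sq_def by auto
  have i1: "integrable lborel (indicator (B \<times> {0..1::real}) :: real \<times> real \<Rightarrow> real)"
    using B1f by (intro integrable_real_indicator) (auto simp: fmeasurable_def)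
  have i2: "integrable lborel (indicator ({0..1::real} \<times> B) :: real \<times> real \<Rightarrow> real)"
    using B2f by (intro integrable_real_indicator) (auto simp: fmeasurable_def)
  have intg: "integrable lborel (\<lambda>z. c * indicator (B \<times> {0..1::real}) z + c * indicator ({0..1::real} \<times> B) z)"
    using i1 i2 by (intro Bochner_Integration.integrable_add integrable_mult_right)
  have m1: "measure lborel (B \<times> {0..1::real}) = measure lborel B"
    using BM(1) by (simp add: measure_Times_real)
  have m2: "measure lborel ({0..1::real} \<times> B) = measure lborel B"
    using BM(1) by (simp add: measure_Times_real)
  have "(LINT z:Sq|lborel. (G z - E z)\<^sup>2) = integral\<^sup>L lborel (\<lambda>z. indicator Sq z * (G z - E z)\<^sup>2)"
    by (simp add: set_lebesgue_integral_def)
  also have "\<dots> \<le> integral\<^sup>L lborel (\<lambda>z. c * indicator (B \<times> {0..1::real}) z + c * indicator ({0..1::real} \<times> B) z)"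
    by (rule integral_mono'[OF intg key]) (use c0 in simp)
  also have "\<dots> = c * measure lborel (B \<times> {0..1::real}) + c * measure lborel ({0..1::real} \<times> B)"
    using i1 i2 by simp
  also have "\<dots> = 2 * c * measure lborel B" unfolding m1 m2 by simp
  also have "\<dots> \<le> 2 * c * (2 * real (card T) / real n)"
    using BM(3) c0 by (intro mult_left_mono) auto
  also have "\<dots> = 16 * C\<^sup>2 * real (card (insert I ch)) / real n" unfolding c_def T_def by simp
  finally have bnd: "(LINT z:Sq|lborel. (G z - E z)\<^sup>2) \<le> 16 * C\<^sup>2 * real (card (insert I ch)) / real n" .
  have "0 \<le> integral\<^sup>L lborel (\<lambda>z. indicator Sq z * (G z - E z)\<^sup>2)"
    by (intro integral_nonneg_AE AE_I2) simp
  then have nn: "0 \<le> (LINT z:Sq|lborel. (G z - E z)\<^sup>2)" by (simp add: set_lebesgue_integral_def)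
  show "hs_dist (step_kernel n (\<lambda>i j. real n * proj_matrix Ups l I n xs i j)) (Ek ch I)
           \<le> sqrt (16 * C\<^sup>2 * real (card (insert I ch)) / real n)"
    unfolding hs_dist_def G_def[symmetric] E_def[symmetric] Sq_def[symmetric] using bnd by simp
  show "0 \<le> hs_dist (step_kernel n (\<lambda>i j. real n * proj_matrix Ups l I n xs i j)) (Ek ch I)"
    unfolding hs_dist_def G_def[symmetric] E_def[symmetric] Sq_def[symmetric] using nn by simp
qed



lemma N_pos:
  assumes part: "nested_partitions M Ups"
  shows "sample_N M Ups > 0"
proof -
  have fin: "finite (Ups M)" using part unfolding nested_partitions_def by auto
  have "rat_denom x > 0" for x unfolding rat_denom_def using quotient_of_denom_pos' by simp
  then have "0 \<notin> (\<lambda>I. rat_denom (len I)) ` Ups M" by (metis imageE less_irrefl)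
  then have "Lcm ((\<lambda>I. rat_denom (len I)) ` Ups M) \<noteq> 0" using Lcm_0_iff[of "(\<lambda>I. rat_denom (len I)) ` Ups M"] fin by simp
  then show ?thesis unfolding sample_N_def by simp
qed

lemma Ek_L2:
  assumes part: "nested_partitions M Ups" and lev: "1 \<le> l" "l < M" and I: "I \<in> Ups l"
  shows "L2_unit_square (Ek (children Ups l I) I)"
proof -
  define ch where "ch = children Ups l I"
  note SF = struct_facts[OF part lev I, folded ch_def]
  define C where "C = (\<Sum>J\<in>ch. 1 / len J) + 1 / len I"
  define Sq where "Sq = ({0..1} \<times> {0..1} :: (real \<times> real) set)"
  have SqF: "Sq \<in> fmeasurable lborel" unfolding Sq_def by (rule Sq_fmeas)
  have Sqs: "Sq \<in> sets lborel" using SqF by auto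
  have bor: "\<forall>J\<in>insert I ch. J \<in> sets borel" using SF(4) real_interval_borel_measurable by blast
  have Em: "Ek ch I \<in> borel_measurable lborel" by (rule Ek_measurable[OF bor])
  have Eb: "\<bar>Ek ch I z\<bar> \<le> C" for z unfolding C_def by (rule Ek_bound[OF SF(1)])
  have C0: "0 \<le> C" using Eb[of "(0,0)"] by linarith
  have m1: "(\<lambda>z. indicator Sq z *\<^sub>R Ek ch I z) \<in> borel_measurable lborel"
    using Sqs Em by measurable
  have m2: "(\<lambda>z. indicator Sq z *\<^sub>R (Ek ch I z)\<^sup>2) \<in> borel_measurable lborel"
    using Sqs Em by measurable
  have iS: "integrable lborel (\<lambda>z. C\<^sup>2 * indicator Sq z :: real)"
    using SqF by (intro integrable_mult_right integrable_real_indicator) (auto simp: fmeasurable_def)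
  have "integrable lborel (\<lambda>z. indicator Sq z *\<^sub>R (Ek ch I z)\<^sup>2)"
  proof (rule Bochner_Integration.integrable_bound[OF iS m2], rule AE_I2)
    fix z
    have "\<bar>Ek ch I z\<bar> \<le> \<bar>C\<bar>" using Eb C0 by simp
    then have "(Ek ch I z)\<^sup>2 \<le> C\<^sup>2" by (simp only: abs_le_square_iff)
    then show "norm (indicator Sq z *\<^sub>R (Ek ch I z)\<^sup>2) \<le> norm (C\<^sup>2 * indicator Sq z :: real)"
      by (auto simp: indicator_def)
  qed
  then show ?thesis unfolding L2_unit_square_def set_borel_measurable_def set_integrable_def Sq_def[symmetric] ch_def[symmetric]
    using m1 by simp
qed



theorem proposition8p1:
  fixes M :: nat and Ups :: "nat \<Rightarrow> real set set"
    and h :: "real set \<Rightarrow> real" and w :: "real \<Rightarrow> real"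
    and x :: "nat \<Rightarrow> nat \<Rightarrow> real"
    and l :: nat and I :: "real set"
  assumes part: "nested_partitions M Ups"
    and h_pos: "\<forall>l\<in>{1..M}. \<forall>J\<in>Ups l. 0 < h J"
    and h_mono: "\<forall>l\<in>{1..M}. \<forall>l'\<in>{1..M}. \<forall>J\<in>Ups l. \<forall>J'\<in>Ups l'. J \<subset> J' \<longrightarrow> h J < h J'"
    and w_range: "\<forall>t\<ge>0. 0 < w t \<and> w t \<le> 1"
    and rat_len: "\<forall>J\<in>Ups M. len J \<in> \<rat>"
    and sample: "\<forall>k\<ge>1. valid_sample M Ups (k * sample_N M Ups) (x k)"
    and lev: "1 \<le> l" "l < M" and I: "I \<in> Ups l"
  shows "\<exists>E. L2_unit_square E \<and>
    (\<lambda>k. hs_dist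
           (step_kernel (k * sample_N M Ups)
              (\<lambda>i j. real (k * sample_N M Ups) *
                       proj_matrix Ups l I (k * sample_N M Ups) (x k) i j))
           E) \<longlonglongrightarrow> 0"
proof -
  define N where "N = sample_N M Ups"
  have N0: "N > 0" using N_pos[OF part] N_def by simp
  define ch where "ch = children Ups l I"
  define C where "C = (\<Sum>J\<in>ch. 1 / len J) + 1 / len I"
  define D where "D = 16 * C\<^sup>2 * real (card (insert I ch))"
  define hs where "hs k = hs_dist (step_kernel (k * N) (\<lambda>i j. real (k * N) * proj_matrix Ups l I (k * N) (x k) i j)) (Ek ch I)" for k
  have ub: "hs k \<le> sqrt (D / real N / real k)" if k: "k \<ge> 1" for k
  proof -
    have n: "k * N > 0" using k N0 by simp
    have vs: "valid_sample M Ups (k * N) (x k)" using sample k N_def by simp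
    have "hs k \<le> sqrt (D / real (k * N))"
      using main_bound(1)[OF part lev I n vs] unfolding hs_def D_def C_def ch_def by simp
    also have "D / real (k * N) = D / real N / real k" by (simp add: divide_divide_eq_left mult.commute)
    finally show ?thesis .
  qed
  have lb: "0 \<le> hs k" if k: "k \<ge> 1" for k
  proof -
    have n: "k * N > 0" using k N0 by simp
    have vs: "valid_sample M Ups (k * N) (x k)" using sample k N_def by simp
    show ?thesis using main_bound(2)[OF part lev I n vs] unfolding hs_def ch_def by simp
  qed
  have up: "(\<lambda>k. sqrt (D / real N / real k)) \<longlonglongrightarrow> 0"
  proof -
    have "(\<lambda>k. D / real N / real k) \<longlonglongrightarrow> 0" by (rule lim_const_over_n)
    then have "(\<lambda>k. sqrt (D / real N / real k)) \<longlonglongrightarrow> sqrt 0" by (rule tendsto_real_sqrt)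
    then show ?thesis by simp
  qed
  have "hs \<longlonglongrightarrow> 0"
  proof (rule tendsto_sandwich[OF _ _ tendsto_const up])
    show "\<forall>\<^sub>F k in sequentially. 0 \<le> hs k" using lb eventually_sequentially by blast
    show "\<forall>\<^sub>F k in sequentially. hs k \<le> sqrt (D / real N / real k)" using ub eventually_sequentially by blast
  qed
  moreover have "L2_unit_square (Ek ch I)" unfolding ch_def by (rule Ek_L2[OF part lev I])
  ultimately show ?thesis unfolding hs_def N_def by blast
qed


end
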